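(* Let $m\geq 2$, $\mathcal M=\{1,\dots,m\}$, $X_{\mathcal M}=(X_1,\dots,X_m)$ a discrete memoryless multiple source with finite alphabets, and $\mathcal A\subseteq\mathcal M$ with $|\mathcal A|\geq 2$. For every $R_{\mathcal M}\in\mathscr R(\mathcal A)$ and all $\mathcal B_1,\mathcal B_2\subseteq\mathcal M$ with $\mathcal B_1\cup\mathcal B_2\in\mathscr B(\mathcal A)$: if $\mathrm{SW}(R_{\mathcal M},\mathcal B_1)=0$ and $\mathrm{SW}(R_{\mathcal M},\mathcal B_2)=0$, then $\mathrm{SW}(R_{\mathcal M},\mathcal B_1\cup\mathcal B_2)=0$ and $\mathrm{SW}(R_{\mathcal M},\mathcal B_1\cap\mathcal B_2)=0$.
   Context: Define $\mathscr B(\mathcal A):=\{\mathcal B\subsetneq\mathcal M:\ \mathcal B\neq\emptyset,\ \mathcal B\not\supseteq\mathcal A\}$. Let $h(\mathcal B):=H(X_{\mathcal B}\mid X_{\mathcal B^c})$ for $\mathcal B\subseteq\mathcal M$ (complements in $\mathcal M$; in particular $h(\emptyset)=0$). For $R_{\mathcal M}=(R_1,\dots,R_m)\in\mathbb R^m$ and $\mathcal B\subseteq\mathcal M$ let $\mathrm{SW}(R_{\mathcal M},\mathcal B):=\sum_{j\in\mathcal B}R_j-h(\mathcal B)$, and $\mathscr R(\mathcal A):=\{R_{\mathcal M}\in\mathbb R^m:\ \mathrm{SW}(R_{\mathcal M},\mathcal B)\geq 0\ \forall\,\mathcal B\in\mathscr B(\mathcal A)\}$. *)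

theory Defs
  imports "HOL-Probability.Probability"
begin

text \<open>A single-letter joint distribution of the source (X_1,...,X_m): a pmf on
 functions nat => 'a (only coordinates in {1..m} are used); 'a is a finite alphabet.\<close>

definition marg :: "(nat \<Rightarrow> 'a) pmf \<Rightarrow> nat set \<Rightarrow> (nat \<Rightarrow> 'a) pmf" where
  "marg P S = map_pmf (\<lambda>x. restrict x S) P"

definition cond_entropy :: "(nat \<Rightarrow> 'a) pmf \<Rightarrow> nat set \<Rightarrow> nat set \<Rightarrow> real" where
  "cond_entropy P B C =
     (let J = map_pmf (\<lambda>x. (restrict x B, restrict x C)) P in
      - (\<Sum>z\<in>set_pmf J. pmf J z * log 2 (pmf J z / pmf (marg P C) (snd z))))"

definition hfun :: "(nat \<Rightarrow> 'a) pmf \<Rightarrow> nat \<Rightarrow> nat set \<Rightarrow> real" where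
  "hfun P m B = cond_entropy P B ({1..m} - B)"

definition SW :: "(nat \<Rightarrow> 'a) pmf \<Rightarrow> nat \<Rightarrow> (nat \<Rightarrow> real) \<Rightarrow> nat set \<Rightarrow> real" where
  "SW P m R B = (\<Sum>j\<in>B. R j) - hfun P m B"

definition Bfam :: "nat \<Rightarrow> nat set \<Rightarrow> nat set set" where
  "Bfam m A = {B. B \<subset> {1..m} \<and> B \<noteq> {} \<and> \<not> A \<subseteq> B}"

definition Rregion :: "(nat \<Rightarrow> 'a) pmf \<Rightarrow> nat \<Rightarrow> nat set \<Rightarrow> (nat \<Rightarrow> real) set" where
  "Rregion P m A = {R. \<forall>B\<in>Bfam m A. SW P m R B \<ge> 0}"

end

theory Submission
  imports Defs
begin

lemma fin_range_restrict: "finite S \<Longrightarrow> finite (range (\<lambda>x::nat\<Rightarrow>'a::finite. restrict x S))"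
proof -
  assume "finite S"
  have "range (\<lambda>x::nat\<Rightarrow>'a. restrict x S) \<subseteq> PiE S (\<lambda>_. UNIV)" by auto
  moreover have "finite (PiE S (\<lambda>_. UNIV::'a set))" using \<open>finite S\<close> by (simp add: finite_PiE)
  ultimately show ?thesis by (rule finite_subset)
qed

lemma intg_fin: "finite (range g) \<Longrightarrow> integrable (measure_pmf P) (\<lambda>x. (F (g x)::real))"
proof -
  assume f: "finite (range g)"
  have "finite (set_pmf (map_pmf g P))" using f by (rule finite_subset[rotated]) auto
  hence "integrable (measure_pmf (map_pmf g P)) F" by (rule integrable_measure_pmf_finite)
  thus ?thesis by (simp add: map_pmf_rep_eq integrable_distr_eq)
qed

lemma sum_as_int: "finite (range g) \<Longrightarrow>
  (\<Sum>z\<in>set_pmf (map_pmf g P). pmf (map_pmf g P) z * F z) = measure_pmf.expectation P (\<lambda>x. (F (g x)::real))"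
proof -
  assume f: "finite (range g)"
  have fs: "finite (set_pmf (map_pmf g P))" using f by (rule finite_subset[rotated]) auto
  have "measure_pmf.expectation P (\<lambda>x. F (g x)) = measure_pmf.expectation (map_pmf g P) F" by simp
  also have "\<dots> = (\<Sum>z\<in>set_pmf (map_pmf g P). F z * pmf (map_pmf g P) z)"
    by (rule integral_measure_pmf_real[OF fs]) auto
  finally show ?thesis by (simp add: mult.commute)
qed

lemma pmf_map_eq: "(\<And>x x'. f x = f x' \<longleftrightarrow> g x = g x') \<Longrightarrow> pmf (map_pmf f P) (f x) = pmf (map_pmf g P) (g x)"
proof -
  assume h: "\<And>x x'. f x = f x' \<longleftrightarrow> g x = g x'"
  have "f -` {f x} = g -` {g x}" using h by auto
  thus ?thesis by (simp add: pmf_map)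
qed

lemma restrict_eq_iff: "restrict x S = restrict y S \<longleftrightarrow> (\<forall>i\<in>S. x i = y i)"
  by (auto simp: fun_eq_iff restrict_def)

definition Hs :: "(nat \<Rightarrow> 'a) pmf \<Rightarrow> nat set \<Rightarrow> real" where
  "Hs P S = - measure_pmf.expectation P (\<lambda>x. log 2 (pmf (marg P S) (restrict x S)))"

lemma marg_pos: "x \<in> set_pmf P \<Longrightarrow> pmf (marg P S) (restrict x S) > 0"
  unfolding marg_def by (rule pmf_positive) auto

lemma chain:
  fixes P :: "(nat \<Rightarrow> 'a::finite) pmf"
  assumes fB: "finite B" and fC: "finite C" and d: "B \<inter> C = {}"
  shows "cond_entropy P B C = Hs P (B \<union> C) - Hs P C"
proof -
  define j where "j = (\<lambda>x::nat\<Rightarrow>'a. (restrict x B, restrict x C))"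
  define J where "J = map_pmf j P"
  have fr: "finite (range j)"
  proof -
    have "range j \<subseteq> range (\<lambda>x::nat\<Rightarrow>'a. restrict x B) \<times> range (\<lambda>x::nat\<Rightarrow>'a. restrict x C)"
      unfolding j_def by auto
    thus ?thesis using fin_range_restrict[OF fB] fin_range_restrict[OF fC] finite_subset by blast
  qed
  have fU: "finite (range (\<lambda>x::nat\<Rightarrow>'a. restrict x (B \<union> C)))" using fB fC by (intro fin_range_restrict) auto
  have fC': "finite (range (\<lambda>x::nat\<Rightarrow>'a. restrict x C))" using fC by (intro fin_range_restrict)
  have ce: "cond_entropy P B C = - measure_pmf.expectation P (\<lambda>x. log 2 (pmf J (j x) / pmf (marg P C) (snd (j x))))"
    unfolding cond_entropy_def Let_def j_def[symmetric] J_def[symmetric]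
    by (subst sum_as_int[OF fr, symmetric]) (simp add: J_def)
  have pj: "pmf J (j x) = pmf (marg P (B \<union> C)) (restrict x (B \<union> C))" for x
    unfolding J_def marg_def
    by (rule pmf_map_eq) (auto simp: j_def restrict_eq_iff)
  have "measure_pmf.expectation P (\<lambda>x. log 2 (pmf J (j x) / pmf (marg P C) (snd (j x))))
     = measure_pmf.expectation P (\<lambda>x. log 2 (pmf (marg P (B \<union> C)) (restrict x (B \<union> C))) - log 2 (pmf (marg P C) (restrict x C)))"
  proof (intro integral_cong_AE)
    show "AE x in measure_pmf P. log 2 (pmf J (j x) / pmf (marg P C) (snd (j x))) =
      log 2 (pmf (marg P (B \<union> C)) (restrict x (B \<union> C))) - log 2 (pmf (marg P C) (restrict x C))"
      unfolding AE_measure_pmf_iff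
    proof
      fix x assume x: "x \<in> set_pmf P"
      have "snd (j x) = restrict x C" by (simp add: j_def)
      thus "log 2 (pmf J (j x) / pmf (marg P C) (snd (j x))) =
      log 2 (pmf (marg P (B \<union> C)) (restrict x (B \<union> C))) - log 2 (pmf (marg P C) (restrict x C))"
        using marg_pos[OF x, of C] marg_pos[OF x, of "B \<union> C"] by (simp add: pj log_divide)
    qed
  qed auto
  also have "\<dots> = measure_pmf.expectation P (\<lambda>x. log 2 (pmf (marg P (B \<union> C)) (restrict x (B \<union> C))))
     - measure_pmf.expectation P (\<lambda>x. log 2 (pmf (marg P C) (restrict x C)))"
    by (intro Bochner_Integration.integral_diff intg_fin[OF fU] intg_fin[OF fC'])
  finally show ?thesis using ce unfolding Hs_def by simp
qed

lemma fin_supp: "finite S \<Longrightarrow> finite (set_pmf (marg (P::(nat \<Rightarrow> 'a::finite) pmf) S))"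
  unfolding marg_def using fin_range_restrict[of S] by (auto intro: finite_subset[OF image_mono])

lemma inner_sum:
  fixes P :: "(nat \<Rightarrow> 'a::finite) pmf"
  assumes fT: "finite T" and IT: "I \<subseteq> T"
  shows "(\<Sum>t\<in>{t\<in>set_pmf (marg P T). restrict t I = c}. pmf (marg P T) t) = pmf (marg P I) c"
proof -
  have mI: "marg P I = map_pmf (\<lambda>t. restrict t I) (marg P T)"
    unfolding marg_def map_pmf_comp using IT by (simp add: Int_absorb1)
  have "pmf (marg P I) c = measure (marg P T) ((\<lambda>t. restrict t I) -` {c})"
    unfolding mI pmf_map ..
  also have "\<dots> = measure (marg P T) ((\<lambda>t. restrict t I) -` {c} \<inter> set_pmf (marg P T))"
    by (rule measure_Int_set_pmf[symmetric])
  also have "((\<lambda>t. restrict t I) -` {c} \<inter> set_pmf (marg P T)) = {t\<in>set_pmf (marg P T). restrict t I = c}"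
    by auto
  also have "measure (marg P T) \<dots> = (\<Sum>t\<in>{t\<in>set_pmf (marg P T). restrict t I = c}. pmf (marg P T) t)"
    by (rule measure_measure_pmf_finite, rule finite_subset[OF _ fin_supp[OF fT]]) auto
  finally show ?thesis ..
qed

lemma comb:
  fixes P :: "(nat \<Rightarrow> 'a::finite) pmf"
  assumes fS: "finite S" and fT: "finite T"
  shows "(\<Sum>u\<in>set_pmf (marg P (S \<union> T)). pmf (marg P S) (restrict u S) * pmf (marg P T) (restrict u T)
           / pmf (marg P (S \<inter> T)) (restrict u (S \<inter> T))) \<le> 1"
proof -
  define I where "I = S \<inter> T"
  define U where "U = S \<union> T"
  define k where "k = (\<lambda>u::nat\<Rightarrow>'a. (restrict u S, restrict u T))"
  define F where "F = (\<lambda>(s,t). pmf (marg P S) s * pmf (marg P T) t / pmf (marg P I) (restrict s I))"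
  define D where "D = (SIGMA s:set_pmf (marg P S). {t\<in>set_pmf (marg P T). restrict t I = restrict s I})"
  have suppU: "set_pmf (marg P U) = (\<lambda>x. restrict x U) ` set_pmf P" by (simp add: marg_def)
  have inj: "inj_on k (set_pmf (marg P U))"
  proof (rule inj_onI)
    fix u u' assume u: "u \<in> set_pmf (marg P U)" and u': "u' \<in> set_pmf (marg P U)" and e: "k u = k u'"
    from u obtain x where ux: "u = restrict x U" using suppU by auto
    from u' obtain x' where ux': "u' = restrict x' U" using suppU by auto
    from e have "\<forall>i\<in>S. u i = u' i" "\<forall>i\<in>T. u i = u' i" by (auto simp: k_def restrict_eq_iff)
    thus "u = u'" unfolding ux ux' U_def by (auto simp: fun_eq_iff restrict_def)
  qed
  have trm: "pmf (marg P S) (restrict u S) * pmf (marg P T) (restrict u T)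
           / pmf (marg P (S \<inter> T)) (restrict u (S \<inter> T)) = F (k u)" for u
    by (simp add: F_def k_def I_def Int_absorb1 Int_commute)
  have sub: "k ` set_pmf (marg P U) \<subseteq> D"
  proof
    fix w assume "w \<in> k ` set_pmf (marg P U)"
    then obtain x where x: "x \<in> set_pmf P" "w = k (restrict x U)" using suppU by auto
    have SU: "U \<inter> S = S" "U \<inter> T = T" "T \<inter> I = I" "S \<inter> I = I" by (auto simp: U_def I_def)
    have "w = (restrict x S, restrict x T)" using x(2) by (simp add: k_def SU)
    thus "w \<in> D" using x(1) by (auto simp: D_def marg_def SU)
  qed
  have fD: "finite D" unfolding D_def
    by (rule finite_SigmaI[OF fin_supp[OF fS]], rule finite_subset[OF _ fin_supp[OF fT, of P]]) auto
  have Fnn: "\<forall>w\<in>D. 0 \<le> F w" by (auto simp: F_def)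
  have "(\<Sum>u\<in>set_pmf (marg P U). F (k u)) = (\<Sum>w\<in>k ` set_pmf (marg P U). F w)"
    by (rule sum.reindex[OF inj, symmetric, unfolded comp_def])
  also have "\<dots> \<le> (\<Sum>w\<in>D. F w)" by (rule sum_mono2[OF fD sub]) (use Fnn in auto)
  also have "\<dots> = (\<Sum>s\<in>set_pmf (marg P S). \<Sum>t\<in>{t\<in>set_pmf (marg P T). restrict t I = restrict s I}. F (s,t))"
  proof -
    have "(\<Sum>s\<in>set_pmf (marg P S). \<Sum>t\<in>{t\<in>set_pmf (marg P T). restrict t I = restrict s I}. F (s,t))
      = (\<Sum>(s,t)\<in>D. F (s,t))" unfolding D_def
      by (rule sum.Sigma, rule fin_supp[OF fS], rule ballI, rule finite_subset[OF _ fin_supp[OF fT, of P]]) auto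
    thus ?thesis by (simp add: case_prod_beta')
  qed
  also have "\<dots> = (\<Sum>s\<in>set_pmf (marg P S). pmf (marg P S) s / pmf (marg P I) (restrict s I) *
        (\<Sum>t\<in>{t\<in>set_pmf (marg P T). restrict t I = restrict s I}. pmf (marg P T) t))"
    by (simp add: F_def sum_distrib_left)
  also have "\<dots> = (\<Sum>s\<in>set_pmf (marg P S). pmf (marg P S) s)"
  proof (rule sum.cong[OF refl])
    fix s assume s: "s \<in> set_pmf (marg P S)"
    then obtain x where x: "x \<in> set_pmf P" "s = restrict x S" by (auto simp: marg_def)
    have "restrict s I = restrict x I" using x by (simp add: I_def Int_absorb1 Int_commute)
    hence pos: "pmf (marg P I) (restrict s I) > 0" using marg_pos[OF x(1)] by simp
    show "pmf (marg P S) s / pmf (marg P I) (restrict s I) *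
        (\<Sum>t\<in>{t\<in>set_pmf (marg P T). restrict t I = restrict s I}. pmf (marg P T) t) = pmf (marg P S) s"
      using pos by (simp add: inner_sum[OF fT] I_def)
  qed
  also have "\<dots> = 1" by (rule sum_pmf_eq_1) (use fin_supp[OF fS, of P] in auto)
  finally show ?thesis unfolding U_def[symmetric] I_def[symmetric] using trm by (simp add: I_def)
qed

lemma ptw:
  fixes a b c d :: real
  assumes "a > 0" "b > 0" "c > 0" "d > 0"
  shows "(1 - a*b/(c*d))/ln 2 \<le> log 2 c + log 2 d - log 2 a - log 2 b"
proof -
  have z: "a*b/(c*d) > 0" using assms by simp
  have "ln (a*b/(c*d)) \<le> a*b/(c*d) - 1" by (rule ln_le_minus_one[OF z])
  moreover have "ln (a*b/(c*d)) = ln a + ln b - ln c - ln d"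
    using assms by (simp add: ln_mult ln_div)
  ultimately have "1 - a*b/(c*d) \<le> ln c + ln d - ln a - ln b" by linarith
  hence "(1 - a*b/(c*d))/ln 2 \<le> (ln c + ln d - ln a - ln b)/ln 2"
    by (rule divide_right_mono) simp
  thus ?thesis by (simp add: log_def diff_divide_distrib add_divide_distrib)
qed

lemma submod:
  fixes P :: "(nat \<Rightarrow> 'a::finite) pmf"
  assumes fS: "finite S" and fT: "finite T"
  shows "Hs P (S \<union> T) + Hs P (S \<inter> T) \<le> Hs P S + Hs P T"
proof -
  define U where "U = S \<union> T"
  define I where "I = S \<inter> T"
  have fU: "finite U" and fI: "finite I" using fS fT by (auto simp: U_def I_def)
  define p where "p = (\<lambda>A u. pmf (marg P A) u)"
  define L where "L = (\<lambda>x::nat\<Rightarrow>'a. log 2 (p U (restrict x U)) + log 2 (p I (restrict x I))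
      - log 2 (p S (restrict x S)) - log 2 (p T (restrict x T)))"
  define G where "G = (\<lambda>u::nat\<Rightarrow>'a. p S (restrict u S) * p T (restrict u T) / (p U u * p I (restrict u I)))"
  have ig: "integrable (measure_pmf P) (\<lambda>x. log 2 (p A (restrict x A)))" if "finite A" for A
    using intg_fin[OF fin_range_restrict[OF that]] .
  have eL: "measure_pmf.expectation P L = Hs P S + Hs P T - Hs P U - Hs P I"
    unfolding L_def Hs_def p_def
    by (simp add: ig[OF fS, unfolded p_def] ig[OF fT, unfolded p_def] ig[OF fU, unfolded p_def] ig[OF fI, unfolded p_def])
  have SU: "U \<inter> S = S" "U \<inter> T = T" "U \<inter> I = I" by (auto simp: U_def I_def)
  have igG: "integrable (measure_pmf P) (\<lambda>x. (1 - G (restrict x U)) / ln 2)"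
    using intg_fin[OF fin_range_restrict[OF fU]] .
  have "measure_pmf.expectation P (\<lambda>x. (1 - G (restrict x U)) / ln 2) \<le> measure_pmf.expectation P L"
  proof (rule integral_mono_AE[OF igG])
    show "integrable (measure_pmf P) L" unfolding L_def
      by (simp add: ig[OF fS] ig[OF fT] ig[OF fU] ig[OF fI])
    show "AE x in measure_pmf P. (1 - G (restrict x U)) / ln 2 \<le> L x"
      unfolding AE_measure_pmf_iff
    proof
      fix x assume x: "x \<in> set_pmf P"
      show "(1 - G (restrict x U)) / ln 2 \<le> L x"
        unfolding G_def L_def using marg_pos[OF x] by (simp add: SU p_def ptw)
    qed
  qed
  moreover have "measure_pmf.expectation P (\<lambda>x. (1 - G (restrict x U)) / ln 2)
      = (1 - measure_pmf.expectation P (\<lambda>x. G (restrict x U))) / ln 2"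
    using intg_fin[OF fin_range_restrict[OF fU], of P G] by simp
  moreover have "measure_pmf.expectation P (\<lambda>x. G (restrict x U)) \<le> 1"
  proof -
    have "measure_pmf.expectation P (\<lambda>x. G (restrict x U)) = (\<Sum>u\<in>set_pmf (marg P U). pmf (marg P U) u * G u)"
      unfolding marg_def by (rule sum_as_int[OF fin_range_restrict[OF fU], symmetric])
    also have "\<dots> = (\<Sum>u\<in>set_pmf (marg P (S \<union> T)). pmf (marg P S) (restrict u S) * pmf (marg P T) (restrict u T)
           / pmf (marg P (S \<inter> T)) (restrict u (S \<inter> T)))"
      unfolding U_def I_def G_def p_def by (intro sum.cong refl) (auto simp: set_pmf_iff)
    also have "\<dots> \<le> 1" by (rule comb[OF fS fT])
    finally show ?thesis .
  qed
  ultimately have "0 \<le> measure_pmf.expectation P L"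
    by (smt (verit) divide_nonneg_pos ln_gt_zero)
  thus ?thesis using eL unfolding U_def I_def by linarith
qed

lemma hfun_eq:
  fixes P :: "(nat \<Rightarrow> 'a::finite) pmf"
  assumes "B \<subseteq> {1..m}"
  shows "hfun P m B = Hs P {1..m} - Hs P ({1..m} - B)"
proof -
  have fB: "finite B" using assms finite_subset by blast
  have "hfun P m B = Hs P (B \<union> ({1..m} - B)) - Hs P ({1..m} - B)"
    unfolding hfun_def by (rule chain[OF fB]) auto
  also have "B \<union> ({1..m} - B) = {1..m}" using assms by auto
  finally show ?thesis .
qed

theorem proposition2:
  fixes P :: "(nat \<Rightarrow> 'a::finite) pmf" and m :: nat and A B1 B2 :: "nat set"
    and R :: "nat \<Rightarrow> real"
  assumes "m \<ge> 2"
    and "A \<subseteq> {1..m}" and "card A \<ge> 2"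
    and "R \<in> Rregion P m A"
    and "B1 \<subseteq> {1..m}" and "B2 \<subseteq> {1..m}"
    and "B1 \<union> B2 \<in> Bfam m A"
    and "SW P m R B1 = 0" and "SW P m R B2 = 0"
  shows "SW P m R (B1 \<union> B2) = 0 \<and> SW P m R (B1 \<inter> B2) = 0"
proof -
  let ?M = "{1..m}"
  have f1: "finite B1" and f2: "finite B2" using assms(5,6) finite_subset by blast+
  have sm: "Hs P ((?M - B1) \<union> (?M - B2)) + Hs P ((?M - B1) \<inter> (?M - B2)) \<le> Hs P (?M - B1) + Hs P (?M - B2)"
    by (rule submod) auto
  have e1: "(?M - B1) \<union> (?M - B2) = ?M - (B1 \<inter> B2)" and e2: "(?M - B1) \<inter> (?M - B2) = ?M - (B1 \<union> B2)" by auto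
  have hs: "hfun P m B1 + hfun P m B2 \<le> hfun P m (B1 \<union> B2) + hfun P m (B1 \<inter> B2)"
    using sm unfolding e1 e2 using assms(5,6)
    by (simp add: hfun_eq[of B1] hfun_eq[of B2] hfun_eq[of "B1 \<union> B2"] hfun_eq[of "B1 \<inter> B2"] Un_least le_infI1)
  have ss: "sum R (B1 \<union> B2) + sum R (B1 \<inter> B2) = sum R B1 + sum R B2"
    by (rule sum.union_inter[OF f1 f2])
  have tot: "SW P m R (B1 \<union> B2) + SW P m R (B1 \<inter> B2) \<le> 0"
    using hs ss assms(8,9) unfolding SW_def by linarith
  have u: "SW P m R (B1 \<union> B2) \<ge> 0" using assms(4,7) unfolding Rregion_def by blast
  have i: "SW P m R (B1 \<inter> B2) \<ge> 0"
  proof (cases "B1 \<inter> B2 = {}")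
    case True
    have "hfun P m {} = 0" by (simp add: hfun_eq)
    thus ?thesis using True by (simp add: SW_def)
  next
    case False
    have "B1 \<inter> B2 \<in> Bfam m A" using assms(7) False unfolding Bfam_def by blast
    thus ?thesis using assms(4) unfolding Rregion_def by blast
  qed
  show ?thesis using tot u i by linarith
qed

end
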